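(* Let $(\mathcal B,<)$ be a monoidal poset, $B\in\mathcal B$, and $i\sim j$ nodes with $r_ir_jB=r_jB$. If $r_iB<B$ and $r_jB<B$, then $\alpha_i+\alpha_j\in B$.
   Context: Setting: $M$ is a spherical simply laced Coxeter diagram with nodes $1,\dots,n$ ($i\sim j$: distinct adjacent nodes; $i\not\sim j$ otherwise); $W$ its Weyl group with positive roots $\Phi^+$, fundamental roots $\alpha_i$, reflections $r_i$, inner product with $(\alpha_i,\alpha_i)=2$, $(\alpha_i,\alpha_j)=-1$ if $i\sim j$, $0$ otherwise; height $\mathrm{ht}(\sum a_k\alpha_k)=\sum a_k$. For a set $B$ of mutually orthogonal positive roots, $wB=\Phi^+\cap\{\pm w\beta:\beta\in B\}$. A $W$-orbit $\mathcal B$ of such sets is admissible if for every $B\in\mathcal B$, all nodes $i\not\sim j$ and root $\gamma$ with $\gamma,\gamma-\alpha_i+\alpha_j\in B$, $r_iB=r_jB$. For $B,C\in\mathcal B$ write $B\prec C$ if $B\ne C$ and the minimal height of an element of $B\setminus C$ is strictly smaller than the minimal height of an element of $C\setminus B$. For admissible $\mathcal B$, the monoidal poset $(\mathcal B,<)$ is $\mathcal B$ with the partial order $<$ given by the transitive closure of the relation $\{(B,r_jB): B\in\mathcal B,\ j\text{ a node},\ B\prec r_jB\}$; $>$ denotes the reverse relation. *)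

theory Defs
  imports Main "HOL-Library.Function_Algebras"
begin

text \<open>A simply laced Coxeter diagram on nodes 1..n is given by an adjacency relation
  adj (symmetric, irreflexive, supported on the nodes). Vectors of the root lattice
  are coefficient functions nat => int w.r.t. the fundamental roots alpha_1..alpha_n.\<close>

definition nodes :: "nat \<Rightarrow> nat set" where
  "nodes n = {1..n}"

definition diagram :: "nat \<Rightarrow> (nat \<Rightarrow> nat \<Rightarrow> bool) \<Rightarrow> bool" where
  "diagram n adj \<longleftrightarrow> (\<forall>i j. adj i j \<longrightarrow> adj j i) \<and> (\<forall>i. \<not> adj i i)
     \<and> (\<forall>i j. adj i j \<longrightarrow> i \<in> nodes n \<and> j \<in> nodes n)"

definition alpha :: "nat \<Rightarrow> nat \<Rightarrow> int" where
  "alpha i = (\<lambda>k. if k = i then 1 else 0)"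

definition cartan :: "(nat \<Rightarrow> nat \<Rightarrow> bool) \<Rightarrow> nat \<Rightarrow> nat \<Rightarrow> int" where
  "cartan adj k l = (if k = l then 2 else if adj k l then -1 else 0)"

definition ip :: "nat \<Rightarrow> (nat \<Rightarrow> nat \<Rightarrow> bool) \<Rightarrow> (nat \<Rightarrow> int) \<Rightarrow> (nat \<Rightarrow> int) \<Rightarrow> int" where
  "ip n adj x y = (\<Sum>k\<in>nodes n. \<Sum>l\<in>nodes n. x k * y l * cartan adj k l)"

definition sref :: "nat \<Rightarrow> (nat \<Rightarrow> nat \<Rightarrow> bool) \<Rightarrow> nat \<Rightarrow> (nat \<Rightarrow> int) \<Rightarrow> (nat \<Rightarrow> int)" where
  "sref n adj i x = x - (\<lambda>k. ip n adj (alpha i) x * alpha i k)"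

text \<open>Weyl group: generated by the simple reflections (they are involutions, so the
  monoid generated equals the group generated).\<close>
inductive_set weyl :: "nat \<Rightarrow> (nat \<Rightarrow> nat \<Rightarrow> bool) \<Rightarrow> ((nat \<Rightarrow> int) \<Rightarrow> (nat \<Rightarrow> int)) set"
  for n adj where
  weyl_id: "id \<in> weyl n adj"
| weyl_step: "w \<in> weyl n adj \<Longrightarrow> i \<in> nodes n \<Longrightarrow> sref n adj i \<circ> w \<in> weyl n adj"

definition spherical :: "nat \<Rightarrow> (nat \<Rightarrow> nat \<Rightarrow> bool) \<Rightarrow> bool" where
  "spherical n adj \<longleftrightarrow> finite (weyl n adj)"

definition roots :: "nat \<Rightarrow> (nat \<Rightarrow> nat \<Rightarrow> bool) \<Rightarrow> (nat \<Rightarrow> int) set" where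
  "roots n adj = {w (alpha i) | w i. w \<in> weyl n adj \<and> i \<in> nodes n}"

definition pos_roots :: "nat \<Rightarrow> (nat \<Rightarrow> nat \<Rightarrow> bool) \<Rightarrow> (nat \<Rightarrow> int) set" where
  "pos_roots n adj = {x \<in> roots n adj. \<forall>k. 0 \<le> x k}"

definition ht :: "nat \<Rightarrow> (nat \<Rightarrow> int) \<Rightarrow> int" where
  "ht n x = (\<Sum>k\<in>nodes n. x k)"

definition act :: "nat \<Rightarrow> (nat \<Rightarrow> nat \<Rightarrow> bool) \<Rightarrow> ((nat \<Rightarrow> int) \<Rightarrow> (nat \<Rightarrow> int))
    \<Rightarrow> (nat \<Rightarrow> int) set \<Rightarrow> (nat \<Rightarrow> int) set" where
  "act n adj w B = pos_roots n adj \<inter> {v. \<exists>\<beta>\<in>B. v = w \<beta> \<or> v = - w \<beta>}"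

definition orth_pos_set :: "nat \<Rightarrow> (nat \<Rightarrow> nat \<Rightarrow> bool) \<Rightarrow> (nat \<Rightarrow> int) set \<Rightarrow> bool" where
  "orth_pos_set n adj B \<longleftrightarrow> B \<subseteq> pos_roots n adj \<and>
     (\<forall>\<beta>\<in>B. \<forall>\<gamma>\<in>B. \<beta> \<noteq> \<gamma> \<longrightarrow> ip n adj \<beta> \<gamma> = 0)"

definition is_orbit :: "nat \<Rightarrow> (nat \<Rightarrow> nat \<Rightarrow> bool) \<Rightarrow> (nat \<Rightarrow> int) set set \<Rightarrow> bool" where
  "is_orbit n adj \<B> \<longleftrightarrow> (\<exists>B0. orth_pos_set n adj B0 \<and> \<B> = (\<lambda>w. act n adj w B0) ` weyl n adj)"

text \<open>i \<not>\<sim> j means: not (distinct and adjacent), i.e. \<not> adj i j (includes i = j).\<close>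
definition admissible :: "nat \<Rightarrow> (nat \<Rightarrow> nat \<Rightarrow> bool) \<Rightarrow> (nat \<Rightarrow> int) set set \<Rightarrow> bool" where
  "admissible n adj \<B> \<longleftrightarrow> is_orbit n adj \<B> \<and>
     (\<forall>B\<in>\<B>. \<forall>i\<in>nodes n. \<forall>j\<in>nodes n. \<forall>\<gamma>. \<not> adj i j \<and> \<gamma> \<in> B \<and> \<gamma> - alpha i + alpha j \<in> B
        \<longrightarrow> act n adj (sref n adj i) B = act n adj (sref n adj j) B)"

definition prec :: "nat \<Rightarrow> (nat \<Rightarrow> int) set \<Rightarrow> (nat \<Rightarrow> int) set \<Rightarrow> bool" where
  "prec n B C \<longleftrightarrow> B \<noteq> C \<and> Min (ht n ` (B - C)) < Min (ht n ` (C - B))"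

definition mless :: "nat \<Rightarrow> (nat \<Rightarrow> nat \<Rightarrow> bool) \<Rightarrow> (nat \<Rightarrow> int) set set
    \<Rightarrow> ((nat \<Rightarrow> int) set \<times> (nat \<Rightarrow> int) set) set" where
  "mless n adj \<B> = {(B, act n adj (sref n adj j) B) | B j.
      B \<in> \<B> \<and> j \<in> nodes n \<and> prec n B (act n adj (sref n adj j) B)}\<^sup>+"

end

theory Submission
  imports Defs Complex_Main
begin


lemma sum_swap4: "(\<Sum>k\<in>K. \<Sum>l\<in>L. \<Sum>w\<in>V. \<Sum>m\<in>M. f k l w m) = (\<Sum>w\<in>V. \<Sum>m\<in>M. \<Sum>k\<in>K. \<Sum>l\<in>L. (f k l w m :: 'a::comm_monoid_add))"
proof -
  have "(\<Sum>k\<in>K. \<Sum>l\<in>L. \<Sum>w\<in>V. \<Sum>m\<in>M. f k l w m) = (\<Sum>k\<in>K. \<Sum>w\<in>V. \<Sum>l\<in>L. \<Sum>m\<in>M. f k l w m)"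
    by (rule sum.cong[OF refl], rule sum.swap)
  also have "\<dots> = (\<Sum>k\<in>K. \<Sum>w\<in>V. \<Sum>m\<in>M. \<Sum>l\<in>L. f k l w m)"
    by (rule sum.cong[OF refl], rule sum.cong[OF refl], rule sum.swap)
  also have "\<dots> = (\<Sum>w\<in>V. \<Sum>k\<in>K. \<Sum>m\<in>M. \<Sum>l\<in>L. f k l w m)"
    by (rule sum.swap)
  also have "\<dots> = (\<Sum>w\<in>V. \<Sum>m\<in>M. \<Sum>k\<in>K. \<Sum>l\<in>L. f k l w m)"
    by (rule sum.cong[OF refl], rule sum.swap)
  finally show ?thesis .
qed

lemma even_sym_sum: fixes m :: nat shows "(\<And>k l. f k l = f l k) \<Longrightarrow> even ((\<Sum>k\<in>{1..m}. \<Sum>l\<in>{1..m}. f k l) - (\<Sum>k\<in>{1..m}. f k k) :: int)"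
proof (induction m)
  case 0 then show ?case by simp
next
  case (Suc m)
  have e: "{1..Suc m} = insert (Suc m) {1..m}" by auto
  have "(\<Sum>k\<in>{1..Suc m}. \<Sum>l\<in>{1..Suc m}. f k l) - (\<Sum>k\<in>{1..Suc m}. f k k)
     = ((\<Sum>k\<in>{1..m}. \<Sum>l\<in>{1..m}. f k l) - (\<Sum>k\<in>{1..m}. f k k)) + 2 * (\<Sum>l\<in>{1..m}. f (Suc m) l)"
    unfolding e using Suc.prems by (simp add: sum.distrib algebra_simps)
  then show ?case using Suc by simp
qed

locale dg =
  fixes n :: nat and adj :: "nat \<Rightarrow> nat \<Rightarrow> bool"
  assumes dgm: "diagram n adj"
begin

abbreviation "N \<equiv> nodes n"
abbreviation "ipp \<equiv> ip n adj"
abbreviation "sr \<equiv> sref n adj"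
abbreviation "W \<equiv> weyl n adj"

lemma finN[simp]: "finite N" by (simp add: nodes_def)

lemma adj_sym: "adj i j \<Longrightarrow> adj j i" using dgm by (auto simp: diagram_def)
lemma adj_irr[simp]: "\<not> adj i i" using dgm by (auto simp: diagram_def)
lemma adj_N: "adj i j \<Longrightarrow> i \<in> N \<and> j \<in> N" using dgm by (auto simp: diagram_def)

lemma cartan_sym: "cartan adj k l = cartan adj l k"
  using adj_sym by (auto simp: cartan_def)

lemma ip_sym: "ipp x y = ipp y x"
  unfolding ip_def
  by (subst sum.swap) (simp add: cartan_sym mult.commute mult.left_commute)

lemma ip_lin2: "ipp x (\<lambda>k. y k + c * z k) = ipp x y + c * ipp x z"
  unfolding ip_def by (simp add: algebra_simps sum.distrib sum_distrib_left)

lemma ip_lin1: "ipp (\<lambda>k. y k + c * z k) x = ipp y x + c * ipp z x"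
  using ip_lin2 ip_sym by metis

lemma ip_cong: "(\<And>k. k \<in> N \<Longrightarrow> x k = x' k) \<Longrightarrow> (\<And>k. k \<in> N \<Longrightarrow> y k = y' k) \<Longrightarrow> ipp x y = ipp x' y'"
  unfolding ip_def by (intro sum.cong refl) auto

lemma ip_alpha: "i \<in> N \<Longrightarrow> ipp (alpha i) y = (\<Sum>l\<in>N. y l * cartan adj i l)"
proof -
  assume i: "i \<in> N"
  have "\<And>k. (\<Sum>l\<in>N. alpha i k * y l * cartan adj k l) = (if k = i then (\<Sum>l\<in>N. y l * cartan adj i l) else 0)"
    by (simp add: alpha_def)
  then have "ipp (alpha i) y = (\<Sum>k\<in>N. if k = i then (\<Sum>l\<in>N. y l * cartan adj i l) else 0)"
    unfolding ip_def by presburger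
  also have "\<dots> = (\<Sum>l\<in>N. y l * cartan adj i l)" using i by (simp add: sum.delta)
  finally show ?thesis .
qed

lemma ip_alpha_alpha: "i \<in> N \<Longrightarrow> k \<in> N \<Longrightarrow> ipp (alpha i) (alpha k) = cartan adj i k"
proof -
  assume i: "i \<in> N" and k: "k \<in> N"
  have "\<And>l. alpha k l * cartan adj i l = (if l = k then cartan adj i k else 0)"
    by (simp add: alpha_def)
  then show ?thesis using i k by (simp add: ip_alpha sum.delta)
qed

lemma sr_apply: "sr i x k = x k - ipp (alpha i) x * alpha i k"
  by (simp add: sref_def)

lemma sr_eq: "sr i x = (\<lambda>k. x k + (- ipp (alpha i) x) * alpha i k)"
  by (auto simp: sr_apply)

lemma sr_invol: "i \<in> N \<Longrightarrow> sr i (sr i x) = x"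
proof -
  assume i: "i \<in> N"
  have "ipp (alpha i) (sr i x) = ipp (alpha i) x + (- ipp (alpha i) x) * ipp (alpha i) (alpha i)"
    unfolding sr_eq ip_lin2 ..
  then have "ipp (alpha i) (sr i x) = - ipp (alpha i) x"
    by (simp add: ip_alpha_alpha[OF i i] cartan_def)
  then show ?thesis by (auto simp: sr_apply)
qed

lemma sr_ip: "i \<in> N \<Longrightarrow> ipp (sr i x) (sr i y) = ipp x y"
proof -
  assume i: "i \<in> N"
  show ?thesis
    unfolding sr_eq ip_lin1 ip_lin2
    by (simp add: ip_alpha_alpha[OF i i] cartan_def ip_sym[of x "alpha i"] algebra_simps)
qed

lemma sr_lin: "sr i (\<lambda>k. a * x k + b * y k) = (\<lambda>k. a * sr i x k + b * sr i y k)"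
proof -
  have "ipp (alpha i) (\<lambda>k. a * x k + b * y k) = a * ipp (alpha i) x + b * ipp (alpha i) y"
    unfolding ip_def by (simp add: algebra_simps sum.distrib sum_distrib_left)
  then show ?thesis by (auto simp: sr_apply algebra_simps)
qed

lemma W_lin: "w \<in> W \<Longrightarrow> w (\<lambda>k. a * x k + b * y k) = (\<lambda>k. a * w x k + b * w y k)"
  by (induction arbitrary: x y rule: weyl.induct) (auto simp: sr_lin)

lemma W_neg: "w \<in> W \<Longrightarrow> w (- x) = - w x"
proof -
  assume w: "w \<in> W"
  have "- x = (\<lambda>k. (-1) * x k + 0 * x k)" by auto
  then have "w (- x) = (\<lambda>k. (-1) * w x k + 0 * w x k)" using W_lin[OF w] by metis
  then show ?thesis by auto
qed

lemma W_ip: "w \<in> W \<Longrightarrow> ipp (w x) (w y) = ipp x y"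
  by (induction arbitrary: x y rule: weyl.induct) (auto simp: sr_ip)

lemma W_comp: "w \<in> W \<Longrightarrow> v \<in> W \<Longrightarrow> w \<circ> v \<in> W"
  by (induction rule: weyl.induct) (auto simp: comp_assoc intro: weyl.intros)

lemma sr_W: "i \<in> N \<Longrightarrow> sr i \<in> W"
  using weyl.weyl_step[OF weyl.weyl_id] by fastforce

lemma W_inj: "w \<in> W \<Longrightarrow> inj w"
proof (induction rule: weyl.induct)
  case weyl_id then show ?case by simp
next
  case (weyl_step w i)
  have "inj (sr i)" by (metis injI sr_invol weyl_step.hyps(2))
  then show ?case using weyl_step inj_compose by blast
qed

lemma W_supp: "w \<in> W \<Longrightarrow> (\<And>k. k \<notin> N \<Longrightarrow> x k = 0) \<Longrightarrow> k \<notin> N \<Longrightarrow> w x k = 0"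
  by (induction arbitrary: k rule: weyl.induct) (auto simp: sr_apply alpha_def)

lemma alpha_root: "i \<in> N \<Longrightarrow> alpha i \<in> roots n adj"
proof -
  assume i: "i \<in> N"
  have "alpha i = id (alpha i)" by simp
  then show ?thesis unfolding roots_def using weyl.weyl_id i by blast
qed

lemma root_W: "r \<in> roots n adj \<Longrightarrow> w \<in> W \<Longrightarrow> w r \<in> roots n adj"
proof -
  assume r: "r \<in> roots n adj" and w: "w \<in> W"
  then obtain v i where v: "v \<in> W" "i \<in> N" "r = v (alpha i)" unfolding roots_def by auto
  have "w r = (w \<circ> v) (alpha i)" using v by simp
  then show ?thesis unfolding roots_def using W_comp[OF w v(1)] v(2) by blast
qed

lemma sr_alpha: "i \<in> N \<Longrightarrow> sr i (alpha i) = - alpha i"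
  by (auto simp: sr_apply ip_alpha_alpha cartan_def)

lemma root_neg: "r \<in> roots n adj \<Longrightarrow> - r \<in> roots n adj"
proof -
  assume "r \<in> roots n adj"
  then obtain v i where v: "v \<in> W" "i \<in> N" "r = v (alpha i)" unfolding roots_def by auto
  have "- r = (v \<circ> sr i) (alpha i)" using v by (simp add: sr_alpha W_neg fun_eq_iff)
  moreover have "v \<circ> sr i \<in> W" using v W_comp sr_W by auto
  ultimately show ?thesis using v unfolding roots_def by blast
qed

lemma root_supp: "r \<in> roots n adj \<Longrightarrow> k \<notin> N \<Longrightarrow> r k = 0"
proof -
  assume r: "r \<in> roots n adj" and k: "k \<notin> N"
  then obtain v i where v: "v \<in> W" "i \<in> N" "r = v (alpha i)" unfolding roots_def by auto
  have "\<And>k. k \<notin> N \<Longrightarrow> alpha i k = 0" using v(2) by (auto simp: alpha_def)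
  then show ?thesis using W_supp[OF v(1) _ k] v(3) by blast
qed

lemma root_norm: "r \<in> roots n adj \<Longrightarrow> ipp r r = 2"
  unfolding roots_def using W_ip by (auto simp: ip_alpha_alpha cartan_def)

lemma ip_even: "even (ipp x x)"
proof -
  have "even ((\<Sum>k\<in>N. \<Sum>l\<in>N. x k * x l * cartan adj k l) - (\<Sum>k\<in>N. x k * x k * cartan adj k k))"
    unfolding nodes_def by (rule even_sym_sum) (simp add: cartan_sym mult.commute mult.left_commute)
  moreover have "even (\<Sum>k\<in>N. x k * x k * cartan adj k k)"
    by (intro dvd_sum) (simp add: cartan_def)
  ultimately have "even ((\<Sum>k\<in>N. \<Sum>l\<in>N. x k * x l * cartan adj k l) - (\<Sum>k\<in>N. x k * x k * cartan adj k k) + (\<Sum>k\<in>N. x k * x k * cartan adj k k))"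
    by (simp only: even_add)
  then show ?thesis unfolding ip_def by simp
qed

lemma W_lin': "w \<in> W \<Longrightarrow> w (\<lambda>k. x k + c * y k) = (\<lambda>k. w x k + c * w y k)"
  using W_lin[of w 1 x c y] by simp

lemma W_neg': "w \<in> W \<Longrightarrow> w (\<lambda>k. - x k) = (\<lambda>k. - w x k)"
  using W_neg[of w x] by (simp add: fun_Compl_def)

end

locale sph = dg +
  assumes finW: "finite (weyl n adj)"
begin

definition Q :: "(nat \<Rightarrow> int) \<Rightarrow> (nat \<Rightarrow> int) \<Rightarrow> int" where
  "Q x y = (\<Sum>w\<in>W. \<Sum>m\<in>N. w x m * w y m)"

lemma Q_sym: "Q x y = Q y x" unfolding Q_def by (simp add: mult.commute)

lemma Q_lin1: "Q (\<lambda>k. x k + c * y k) z = Q x z + c * Q y z"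
  unfolding Q_def by (simp add: W_lin' algebra_simps sum.distrib sum_distrib_left cong: sum.cong)

lemma Q_neg2: "Q x (\<lambda>k. - y k) = - Q x y"
  unfolding Q_def by (simp add: W_neg' sum_negf cong: sum.cong)

lemma Q_inv: "i \<in> N \<Longrightarrow> Q (sr i x) (sr i y) = Q x y"
proof -
  assume i: "i \<in> N"
  have bij: "bij_betw (\<lambda>w. w \<circ> sr i) W W"
  proof (rule bij_betw_byWitness[where f'="\<lambda>w. w \<circ> sr i"])
    have c: "\<And>w. w \<circ> sr i \<circ> sr i = w" by (rule ext) (simp add: sr_invol[OF i])
    show "\<forall>a\<in>W. a \<circ> sr i \<circ> sr i = a" using c by blast
    show "\<forall>a\<in>W. a \<circ> sr i \<circ> sr i = a" using c by blast
    have "\<And>w. w \<in> W \<Longrightarrow> w \<circ> sr i \<in> W" using W_comp sr_W[OF i] by blast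
    then show "(\<lambda>w. w \<circ> sr i) ` W \<subseteq> W" "(\<lambda>w. w \<circ> sr i) ` W \<subseteq> W" by blast+
  qed
  show ?thesis unfolding Q_def
    using sum.reindex_bij_betw[OF bij, of "\<lambda>w. \<Sum>m\<in>N. w x m * w y m"] by simp
qed

lemma Q_key: "i \<in> N \<Longrightarrow> 2 * Q x (alpha i) = ipp (alpha i) x * Q (alpha i) (alpha i)"
proof -
  assume i: "i \<in> N"
  have "Q (sr i x) (sr i (alpha i)) = Q x (alpha i)" by (rule Q_inv[OF i])
  moreover have "sr i (alpha i) = (\<lambda>k. - alpha i k)" using sr_alpha[OF i] by (simp add: fun_Compl_def)
  ultimately have "Q (\<lambda>k. x k + (- ipp (alpha i) x) * alpha i k) (\<lambda>k. - alpha i k) = Q x (alpha i)"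
    by (simp only: sr_eq[symmetric])
  then show ?thesis unfolding Q_neg2 Q_lin1 by (simp add: algebra_simps)
qed

lemma Q_pos: "i \<in> N \<Longrightarrow> Q (alpha i) (alpha i) > 0"
proof -
  assume i: "i \<in> N"
  have "(\<Sum>m\<in>N. id (alpha i) m * id (alpha i) m) \<le> Q (alpha i) (alpha i)"
    unfolding Q_def using finW weyl.weyl_id[of n adj, unfolded id_def]
    by (intro member_le_sum) (auto intro!: sum_nonneg)
  moreover have "(\<Sum>m\<in>N. id (alpha i) m * id (alpha i) m) = 1"
    using i by (simp add: alpha_def if_distrib cong: if_cong)
  ultimately show ?thesis by simp
qed

end


context sph begin

lemma pd: assumes k0: "k0 \<in> N" and xk0: "x k0 \<noteq> 0" shows "ipp x x > 0"
proof -
  define q :: "nat \<Rightarrow> nat \<Rightarrow> real" where "q k l = real_of_int (Q (alpha k) (alpha l))" for k l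
  have qpos: "k \<in> N \<Longrightarrow> q k k > 0" for k using Q_pos by (simp add: q_def)
  have qsym: "q k l = q l k" for k l by (simp add: q_def Q_sym)
  have key: "2 * q k l = real_of_int (cartan adj k l) * q l l" if "k \<in> N" "l \<in> N" for k l
  proof -
    have "2 * Q (alpha k) (alpha l) = ipp (alpha l) (alpha k) * Q (alpha l) (alpha l)"
      using Q_key[OF that(2)] .
    then have "2 * Q (alpha k) (alpha l) = cartan adj k l * Q (alpha l) (alpha l)"
      using that by (simp add: ip_alpha_alpha cartan_sym)
    then show ?thesis unfolding q_def by (metis of_int_mult of_int_numeral)
  qed
  define mu where "mu k = sqrt (2 / q k k)" for k
  have cart: "real_of_int (cartan adj k l) = mu k * mu l * q k l" if kl: "k \<in> N" "l \<in> N" for k l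
  proof (cases "q k l = 0")
    case True
    then show ?thesis using key[OF kl] qpos[OF kl(2)] by simp
  next
    case False
    have c0: "cartan adj k l \<noteq> 0" using key[OF kl] False by auto
    have "real_of_int (cartan adj k l) * q l l = real_of_int (cartan adj k l) * q k k"
      using key[OF kl] key[OF kl(2) kl(1)] qsym[of k l] cartan_sym[of k l] by auto
    then have e: "q l l = q k k" using c0 by simp
    have m: "mu k * mu l = 2 / q k k" unfolding mu_def e using qpos[OF kl(1)]
      by (simp add: real_sqrt_mult[symmetric])
    have "mu k * mu l * q k l = 2 * q k l / q k k" by (simp add: m)
    also have "\<dots> = real_of_int (cartan adj k l)" using key[OF kl] e qpos[OF kl(1)] by simp
    finally show ?thesis by simp
  qed
  define a where "a w k m = real_of_int (w (alpha k) m)" for w :: "(nat \<Rightarrow> int) \<Rightarrow> (nat \<Rightarrow> int)" and k m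
  define y where "y k = mu k * real_of_int (x k)" for k
  have qa: "q k l = (\<Sum>w\<in>W. \<Sum>m\<in>N. a w k m * a w l m)" for k l
    by (simp add: q_def Q_def a_def)
  have "real_of_int (ipp x x) = (\<Sum>k\<in>N. \<Sum>l\<in>N. real_of_int (x k) * real_of_int (x l) * real_of_int (cartan adj k l))"
    by (simp add: ip_def)
  also have "\<dots> = (\<Sum>k\<in>N. \<Sum>l\<in>N. y k * y l * q k l)"
    by (intro sum.cong refl) (simp add: cart y_def)
  also have "\<dots> = (\<Sum>k\<in>N. \<Sum>l\<in>N. \<Sum>w\<in>W. \<Sum>m\<in>N. y k * y l * (a w k m * a w l m))"
    by (simp add: qa sum_distrib_left)
  also have "\<dots> = (\<Sum>w\<in>W. \<Sum>m\<in>N. \<Sum>k\<in>N. \<Sum>l\<in>N. y k * y l * (a w k m * a w l m))"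
    by (rule sum_swap4)
  also have "\<dots> = (\<Sum>w\<in>W. \<Sum>m\<in>N. (\<Sum>k\<in>N. y k * a w k m)\<^sup>2)"
    by (simp add: power2_eq_square sum_product mult_ac)
  finally have e1: "real_of_int (ipp x x) = (\<Sum>w\<in>W. \<Sum>m\<in>N. (\<Sum>k\<in>N. y k * a w k m)\<^sup>2)" .
  have "(\<Sum>m\<in>N. (\<Sum>k\<in>N. y k * a id k m)\<^sup>2) \<le> (\<Sum>w\<in>W. \<Sum>m\<in>N. (\<Sum>k\<in>N. y k * a w k m)\<^sup>2)"
    using finW weyl.weyl_id[of n adj, unfolded id_def]
    by (intro member_le_sum) (auto intro!: sum_nonneg)
  moreover have "(\<Sum>k\<in>N. y k * a id k m) = y m" if "m \<in> N" for m
  proof -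
    have "\<And>k. y k * a id k m = (if k = m then y m else 0)" by (simp add: a_def alpha_def)
    then show ?thesis using that by (simp add: sum.delta)
  qed
  ultimately have "(\<Sum>m\<in>N. (y m)\<^sup>2) \<le> real_of_int (ipp x x)" using e1 by simp
  moreover have "(y k0)\<^sup>2 \<le> (\<Sum>m\<in>N. (y m)\<^sup>2)" using k0 by (intro member_le_sum) auto
  moreover have "mu k0 > 0" using qpos[OF k0] by (simp add: mu_def)
  then have "(y k0)\<^sup>2 > 0" using xk0 by (simp add: y_def)
  ultimately show ?thesis by linarith
qed

lemma pd2: "k0 \<in> N \<Longrightarrow> x k0 \<noteq> 0 \<Longrightarrow> ipp x x \<ge> 2"
proof -
  assume "k0 \<in> N" "x k0 \<noteq> 0"
  then have p: "ipp x x > 0" by (rule pd)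
  obtain m where "ipp x x = 2 * m" using ip_even[of x] by (rule evenE)
  then show ?thesis using p by presburger
qed

end


context sph begin

lemma ip_neg2: "ipp x (- y) = - ipp x y"
  unfolding ip_def by (simp add: sum_negf)
lemma ip_neg1: "ipp (- x) y = - ipp x y"
  unfolding ip_def by (simp add: sum_negf)
lemma ip_smul1: "ipp (\<lambda>k. c * x k) y = c * ipp x y"
  unfolding ip_def by (simp add: sum_distrib_left mult_ac)

lemma sign_coh:
  assumes y2: "ipp y y = 2"
  shows "(\<forall>k\<in>N. 0 \<le> y k) \<or> (\<forall>k\<in>N. y k \<le> 0)"
proof (rule ccontr)
  assume "\<not> ?thesis"
  then obtain k l where k: "k \<in> N" "y k < 0" and l: "l \<in> N" "y l > 0" by force
  define p where "p k = max (y k) 0" for k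
  define q where "q k = max (- y k) 0" for k
  have ye: "y = (\<lambda>k. p k + (-1) * q k)" by (auto simp: p_def q_def fun_eq_iff)
  have "ipp y y = ipp p p + (-1) * ipp q p + (-1) * (ipp p q + (-1) * ipp q q)"
    unfolding ye ip_lin1 ip_lin2 by (simp add: algebra_simps)
  then have e: "ipp y y = ipp p p - 2 * ipp p q + ipp q q" using ip_sym[of q p] by simp
  have "ipp p q \<le> 0"
    unfolding ip_def
  proof (intro sum_nonpos)
    fix a b assume "a \<in> N" "b \<in> N"
    show "p a * q b * cartan adj a b \<le> 0"
    proof (cases "a = b")
      case True then show ?thesis by (simp add: p_def q_def)
    next
      case False
      have "p a * q b \<ge> 0" by (simp add: p_def q_def)
      moreover have "cartan adj a b \<le> 0" using False by (simp add: cartan_def)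
      ultimately show ?thesis by (simp add: mult_nonneg_nonpos)
    qed
  qed
  moreover have "ipp p p \<ge> 2" using l by (intro pd2[of l]) (auto simp: p_def)
  moreover have "ipp q q \<ge> 2" using k by (intro pd2[of k]) (auto simp: q_def)
  ultimately show False using e y2 by linarith
qed

lemma root_sign: "r \<in> roots n adj \<Longrightarrow> (\<forall>k. 0 \<le> r k) \<or> (\<forall>k. r k \<le> 0)"
  using sign_coh[OF root_norm] root_supp by (metis order_refl)

lemma root_nz: "r \<in> roots n adj \<Longrightarrow> \<exists>k\<in>N. r k \<noteq> 0"
proof (rule ccontr)
  assume r: "r \<in> roots n adj" and "\<not> (\<exists>k\<in>N. r k \<noteq> 0)"
  then have "ipp r r = ipp (\<lambda>k. 0) (\<lambda>k. 0)" by (intro ip_cong) auto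
  then show False using root_norm[OF r] by (simp add: ip_def)
qed

lemma pos_nz: "r \<in> pos_roots n adj \<Longrightarrow> - r \<notin> pos_roots n adj"
proof
  assume r: "r \<in> pos_roots n adj" and m: "- r \<in> pos_roots n adj"
  obtain k where "r k \<noteq> 0" using r root_nz by (auto simp: pos_roots_def)
  then show False using r m by (auto simp: pos_roots_def) (metis neg_0_le_iff_le order_antisym_conv)
qed

lemma root_ip_le: assumes r: "r \<in> roots n adj" and s: "s \<in> roots n adj" and rs: "r \<noteq> s"
  shows "ipp r s \<le> 1"
proof -
  obtain k where k: "r k \<noteq> s k" using rs by (auto simp: fun_eq_iff)
  have kN: "k \<in> N" using k root_supp[OF r] root_supp[OF s] by force
  define d where "d = (\<lambda>k. r k + (-1) * s k)"
  have "ipp d d \<ge> 2" using k kN by (intro pd2[of k]) (auto simp: d_def)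
  moreover have "ipp d d = ipp r r + (-1) * ipp s r + (-1) * (ipp r s + (-1) * ipp s s)"
    unfolding d_def ip_lin1 ip_lin2 by (simp add: algebra_simps)
  ultimately show ?thesis using root_norm[OF r] root_norm[OF s] ip_sym[of s r] by (simp add: algebra_simps)
qed

lemma root_ip_ge: assumes r: "r \<in> roots n adj" and s: "s \<in> roots n adj" and rs: "r \<noteq> - s"
  shows "ipp r s \<ge> -1"
  using root_ip_le[OF r root_neg[OF s] rs] ip_neg2[of r s] by simp

lemma ht_lin: "ht n (\<lambda>k. x k + c * y k) = ht n x + c * ht n y"
  unfolding ht_def by (simp add: sum.distrib sum_distrib_left)

lemma ht_alpha: "i \<in> N \<Longrightarrow> ht n (alpha i) = 1"
  unfolding ht_def alpha_def by simp

lemma ht_sr: "i \<in> N \<Longrightarrow> ht n (sr i x) = ht n x - ipp (alpha i) x"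
  unfolding sr_eq ht_lin ht_alpha by simp

lemma alpha_pos: "i \<in> N \<Longrightarrow> alpha i \<in> pos_roots n adj"
  using alpha_root by (auto simp: pos_roots_def alpha_def)

lemma neg_alpha_notpos: "- alpha i \<notin> pos_roots n adj"
  by (auto simp: pos_roots_def alpha_def)

lemma posroot_sr:
  assumes b: "b \<in> pos_roots n adj" and i: "i \<in> N" and bi: "b \<noteq> alpha i"
  shows "sr i b \<in> pos_roots n adj"
proof -
  have br: "b \<in> roots n adj" and bnn: "\<And>k. 0 \<le> b k" using b by (auto simp: pos_roots_def)
  have sr: "sr i b \<in> roots n adj" using root_W[OF br sr_W[OF i]] .
  have "\<exists>k. k \<noteq> i \<and> b k > 0"
  proof (rule ccontr)
    assume "\<not> ?thesis"
    then have z: "\<And>k. k \<noteq> i \<Longrightarrow> b k = 0" using bnn by (metis order.not_eq_order_implies_strict)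
    then have be: "b = (\<lambda>k. b i * alpha i k)" by (auto simp: alpha_def fun_eq_iff)
    have "ipp b b = b i * b i * 2"
      by (subst (1 2) be) (simp add: ip_smul1 ip_sym[of _ "\<lambda>k. b i * alpha i k"] ip_alpha_alpha[OF i i] cartan_def)
    then have "b i * b i = 1" using root_norm[OF br] by simp
    then have "b i = 1" using zmult_eq_1_iff[of "b i" "b i"] bnn[of i] by auto
    then have "b = alpha i" using be by (simp add: fun_eq_iff)
    then show False using bi by simp
  qed
  then obtain k where k: "k \<noteq> i" "b k > 0" by auto
  have "sr i b k = b k" using k by (simp add: sr_apply alpha_def)
  then have "\<not> (\<forall>k. sr i b k \<le> 0)" using k by (metis not_le)
  then have "\<forall>k. 0 \<le> sr i b k" using root_sign[OF sr] by blast
  then show ?thesis using sr by (simp add: pos_roots_def)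
qed

lemma sr_neg: "sr i (- x) = - sr i x"
  by (simp add: sr_apply fun_eq_iff ip_neg2)

end



definition precw :: "nat \<Rightarrow> (nat \<Rightarrow> int) set \<Rightarrow> (nat \<Rightarrow> int) set \<Rightarrow> bool" where
  "precw n B C \<longleftrightarrow> (\<exists>x\<in>B - C. \<forall>y\<in>C - B. ht n x < ht n y)"

lemma precw_trans: "precw n B C \<Longrightarrow> precw n C D \<Longrightarrow> precw n B D"
proof -
  assume "precw n B C" "precw n C D"
  then obtain x1 x2 where x1: "x1 \<in> B - C" "\<forall>y\<in>C - B. ht n x1 < ht n y"
    and x2: "x2 \<in> C - D" "\<forall>y\<in>D - C. ht n x2 < ht n y" unfolding precw_def by blast
  show ?thesis
  proof (cases "ht n x1 \<le> ht n x2")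
    case True
    have "x1 \<notin> D"
    proof
      assume "x1 \<in> D"
      then have "ht n x2 < ht n x1" using x1 x2 by blast
      then show False using True by simp
    qed
    moreover have "\<forall>y\<in>D - B. ht n x1 < ht n y"
    proof
      fix y assume y: "y \<in> D - B"
      show "ht n x1 < ht n y"
      proof (cases "y \<in> C")
        case True then show ?thesis using x1 y by blast
      next
        case False then have "ht n x2 < ht n y" using x2 y by blast
        then show ?thesis using \<open>ht n x1 \<le> ht n x2\<close> by simp
      qed
    qed
    ultimately show ?thesis using x1 unfolding precw_def by blast
  next
    case False
    have "x2 \<in> B"
    proof (rule ccontr)
      assume "x2 \<notin> B"
      then have "ht n x1 < ht n x2" using x1 x2 by blast
      then show False using False by simp
    qed
    moreover have "\<forall>y\<in>D - B. ht n x2 < ht n y"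
    proof
      fix y assume y: "y \<in> D - B"
      show "ht n x2 < ht n y"
      proof (cases "y \<in> C")
        case True then have "ht n x1 < ht n y" using x1 y by blast
        then show ?thesis using False by simp
      next
        case False then show ?thesis using x2 y by blast
      qed
    qed
    ultimately show ?thesis using x2 unfolding precw_def by blast
  qed
qed

lemma prec_precw:
  assumes "finite B" "finite C" "B - C \<noteq> {}" "prec n B C"
  shows "precw n B C"
proof -
  have f: "finite (ht n ` (B - C))" "ht n ` (B - C) \<noteq> {}" using assms by auto
  obtain x where x: "x \<in> B - C" "ht n x = Min (ht n ` (B - C))" using Min_in[OF f] by auto
  have "\<forall>y\<in>C - B. ht n x < ht n y"
  proof
    fix y assume y: "y \<in> C - B"
    have "Min (ht n ` (C - B)) \<le> ht n y" using y assms(2) by (intro Min_le) auto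
    then show "ht n x < ht n y" using x assms(4) unfolding prec_def by linarith
  qed
  then show ?thesis using x unfolding precw_def by blast
qed

locale orb = sph +
  fixes B0 :: "(nat \<Rightarrow> int) set"
  assumes B0: "orth_pos_set n adj B0"
begin

abbreviation "OB \<equiv> (\<lambda>w. act n adj w B0) ` W"

lemma B0_sub: "B0 \<subseteq> pos_roots n adj" using B0 by (simp add: orth_pos_set_def)

lemma B0_root: "b \<in> B0 \<Longrightarrow> b \<in> roots n adj" using B0_sub by (auto simp: pos_roots_def)

lemma act_sub: "act n adj w B \<subseteq> pos_roots n adj" by (auto simp: act_def)

lemma pos_root: "x \<in> pos_roots n adj \<Longrightarrow> x \<in> roots n adj" by (simp add: pos_roots_def)

lemma root_pm: "r \<in> roots n adj \<Longrightarrow> r \<in> pos_roots n adj \<or> - r \<in> pos_roots n adj"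
  using root_sign[of r] root_neg[of r] by (auto simp: pos_roots_def)

lemma act_comp: assumes w: "w \<in> W" and j: "j \<in> N"
  shows "act n adj (sr j) (act n adj w B0) = act n adj (sr j \<circ> w) B0"
proof (rule set_eqI)
  fix x
  show "x \<in> act n adj (sr j) (act n adj w B0) \<longleftrightarrow> x \<in> act n adj (sr j \<circ> w) B0"
  proof
    assume "x \<in> act n adj (sr j) (act n adj w B0)"
    then obtain b' b where x: "x \<in> pos_roots n adj" "x = sr j b' \<or> x = - sr j b'"
      and b: "b \<in> B0" "b' = w b \<or> b' = - w b" unfolding act_def by auto
    then have "x = sr j (w b) \<or> x = - sr j (w b)" by (auto simp: sr_neg)
    then show "x \<in> act n adj (sr j \<circ> w) B0" using x b unfolding act_def by auto
  next
    assume "x \<in> act n adj (sr j \<circ> w) B0"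
    then obtain b where x: "x \<in> pos_roots n adj" "x = sr j (w b) \<or> x = - sr j (w b)" and b: "b \<in> B0"
      unfolding act_def by auto
    have "w b \<in> roots n adj" using root_W[OF B0_root[OF b] w] .
    then have "w b \<in> pos_roots n adj \<or> - w b \<in> pos_roots n adj" by (rule root_pm)
    then show "x \<in> act n adj (sr j) (act n adj w B0)"
    proof
      assume "w b \<in> pos_roots n adj"
      then have "w b \<in> act n adj w B0" using b unfolding act_def by auto
      then show ?thesis using x unfolding act_def by auto
    next
      assume "- w b \<in> pos_roots n adj"
      then have "- w b \<in> act n adj w B0" using b unfolding act_def by auto
      moreover have "x = sr j (- w b) \<or> x = - sr j (- w b)" using x by (auto simp: sr_neg)
      ultimately show ?thesis using x unfolding act_def by blast
    qed
  qed
qed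

lemma OB_step: "B \<in> OB \<Longrightarrow> j \<in> N \<Longrightarrow> act n adj (sr j) B \<in> OB"
  using act_comp W_comp sr_W by auto

lemma OB_sub: "B \<in> OB \<Longrightarrow> B \<subseteq> pos_roots n adj" using act_sub by auto

lemma roots_fin: "finite (roots n adj)"
proof -
  have "roots n adj = (\<lambda>(w, i). w (alpha i)) ` (W \<times> N)" unfolding roots_def by auto
  then show ?thesis using finW by simp
qed

lemma OB_fin: "B \<in> OB \<Longrightarrow> finite B"
  using OB_sub roots_fin by (meson finite_subset pos_root subsetI)

lemma OB_orth: assumes B: "B \<in> OB" and b: "b \<in> B" and c: "c \<in> B" and bc: "b \<noteq> c"
  shows "ipp b c = 0"
proof -
  obtain w where w: "w \<in> W" "B = act n adj w B0" using B by auto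
  obtain b0 where b0: "b0 \<in> B0" "b = w b0 \<or> b = - w b0" using b w unfolding act_def by auto
  obtain c0 where c0: "c0 \<in> B0" "c = w c0 \<or> c = - w c0" using c w unfolding act_def by auto
  have bp: "b \<in> pos_roots n adj" "c \<in> pos_roots n adj" using b c B OB_sub by auto
  show ?thesis
  proof (cases "b0 = c0")
    case True
    then have "b = - c" using b0 c0 bc by auto
    then show ?thesis using bp pos_nz by auto
  next
    case False
    then have "ipp b0 c0 = 0" using B0 b0 c0 unfolding orth_pos_set_def by auto
    then have "ipp (w b0) (w c0) = 0" using W_ip[OF w(1)] by simp
    then show ?thesis using b0(2) c0(2) by (auto simp: ip_neg1 ip_neg2)
  qed
qed

lemma OB_card: assumes B: "B \<in> OB" shows "card B = card B0"
proof -
  obtain w where w: "w \<in> W" "B = act n adj w B0" using B by auto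
  define f where "f b = (if w b \<in> pos_roots n adj then w b else - w b)" for b
  have wr: "b \<in> B0 \<Longrightarrow> w b \<in> roots n adj" for b using root_W[OF B0_root w(1)] .
  have "inj_on f B0"
  proof
    fix b c assume b: "b \<in> B0" and c: "c \<in> B0" and e: "f b = f c"
    have injw: "inj w" using W_inj[OF w(1)] .
    have "w b = w c \<or> w b = - w c" using e by (auto simp: f_def split: if_splits) (metis minus_minus)
    then show "b = c"
    proof
      assume "w b = w c" then show ?thesis using injw by (simp add: inj_eq)
    next
      assume "w b = - w c"
      then have "w b = w (- c)" using W_neg[OF w(1)] by simp
      then have "b = - c" using injw by (simp add: inj_eq)
      then show ?thesis using b c B0_sub pos_nz by auto
    qed
  qed
  moreover have "f ` B0 = B"
  proof
    show "f ` B0 \<subseteq> B"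
    proof
      fix x assume "x \<in> f ` B0"
      then obtain b where b: "b \<in> B0" "x = f b" by auto
      have "x \<in> pos_roots n adj" using root_pm[OF wr[OF b(1)]] b by (auto simp: f_def)
      then show "x \<in> B" using b w unfolding act_def f_def by auto
    qed
    show "B \<subseteq> f ` B0"
    proof
      fix x assume "x \<in> B"
      then obtain b where b: "b \<in> B0" "x = w b \<or> x = - w b" "x \<in> pos_roots n adj"
        using w unfolding act_def by auto
      have "x = f b"
      proof (cases "x = w b")
        case True then show ?thesis using b by (simp add: f_def)
      next
        case False
        then have "x = - w b" using b by auto
        then have "w b \<notin> pos_roots n adj" using b(3) pos_nz by fastforce
        then show ?thesis using \<open>x = - w b\<close> by (simp add: f_def)
      qed
      then show "x \<in> f ` B0" using b by auto
    qed
  qed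
  ultimately show ?thesis using card_image by blast
qed

lemma OB_diff: "B \<in> OB \<Longrightarrow> C \<in> OB \<Longrightarrow> B \<noteq> C \<Longrightarrow> B - C \<noteq> {}"
  using OB_card OB_fin by (metis Diff_eq_empty_iff card_subset_eq)

lemma mless_precw: "(X, Y) \<in> mless n adj OB \<Longrightarrow> precw n X Y"
proof -
  let ?R = "{(B, act n adj (sr j) B) | B j. B \<in> OB \<and> j \<in> N \<and> prec n B (act n adj (sr j) B)}"
  have stepw: "precw n X Y" if R: "(X, Y) \<in> ?R" for X Y
  proof -
    obtain j where j: "X \<in> OB" "j \<in> N" "Y = act n adj (sr j) X" "prec n X (act n adj (sr j) X)"
      using R by blast
    have Y: "Y \<in> OB" using OB_step j by simp
    have "X \<noteq> Y" using j(3,4) by (simp add: prec_def)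
    then show ?thesis using prec_precw[of X Y n] OB_fin[of X] OB_fin[of Y] OB_diff[of X Y] j Y by simp
  qed
  assume "(X, Y) \<in> mless n adj OB"
  then have "(X, Y) \<in> ?R\<^sup>+" unfolding mless_def by simp
  then show ?thesis
  proof (induction rule: trancl_induct)
    case (base y) then show ?case using stepw by blast
  next
    case (step y z) then show ?case using precw_trans stepw by blast
  qed
qed

end


context orb begin

lemma sr_alpha_other: "i \<in> N \<Longrightarrow> j \<in> N \<Longrightarrow> adj i j \<Longrightarrow> sr j (alpha i) = alpha i + alpha j"
  using adj_sym[of i j] by (auto simp: sr_apply ip_alpha_alpha cartan_def fun_eq_iff)

lemma lemE:
  assumes B: "B \<in> OB" and i: "i \<in> N" and p: "precw n (act n adj (sr i) B) B"
  shows "\<exists>d\<in>B. d \<noteq> alpha i \<and> ipp (alpha i) d = 1 \<and> (\<forall>v\<in>B - act n adj (sr i) B. ht n d \<le> ht n v)"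
proof -
  obtain u where u: "u \<in> act n adj (sr i) B - B" "\<forall>v\<in>B - act n adj (sr i) B. ht n u < ht n v"
    using p unfolding precw_def by blast
  obtain b where b: "b \<in> B" "u = sr i b \<or> u = - sr i b" "u \<in> pos_roots n adj"
    using u unfolding act_def by auto
  have bp: "b \<in> pos_roots n adj" using b B OB_sub by auto
  have bi: "b \<noteq> alpha i"
  proof
    assume ba: "b = alpha i"
    then have "sr i b = - alpha i" using sr_alpha[OF i] by simp
    then have "u = - alpha i \<or> u = alpha i" using b(2) by auto
    then show False
    proof
      assume "u = - alpha i" then show False using b(3) neg_alpha_notpos by simp
    next
      assume "u = alpha i" then show False using u(1) b(1) ba by simp
    qed
  qed
  have sp: "sr i b \<in> pos_roots n adj" using posroot_sr[OF bp i bi] .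
  have us: "u = sr i b" using b sp pos_nz by auto
  define c where "c = ipp (alpha i) b"
  have c0: "c \<noteq> 0"
  proof
    assume "c = 0" then have "sr i b = b" by (simp add: sr_apply c_def fun_eq_iff)
    then show False using us u b by auto
  qed
  have c1: "c \<le> 1" unfolding c_def using root_ip_le[OF alpha_root[OF i] pos_root[OF bp]] bi by auto
  have bnot: "b \<notin> act n adj (sr i) B"
  proof
    assume "b \<in> act n adj (sr i) B"
    then obtain b' where b': "b' \<in> B" "b = sr i b' \<or> b = - sr i b'" unfolding act_def by auto
    then have "sr i b = b' \<or> sr i b = - b'" using sr_invol[OF i] sr_neg by (metis minus_minus)
    then show False
    proof
      assume "sr i b = b'" then show False using us u b' by auto
    next
      assume "sr i b = - b'"
      then have "- b' \<in> pos_roots n adj" using sp by simp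
      then show False using pos_nz b' B OB_sub by auto
    qed
  qed
  have "ht n u < ht n b" using u bnot b by blast
  moreover have "ht n u = ht n b - c" using us ht_sr[OF i] by (simp add: c_def)
  ultimately have "c = 1" using c0 c1 by linarith
  moreover have "\<forall>v\<in>B - act n adj (sr i) B. ht n b \<le> ht n v"
    using u(2) \<open>ht n u = ht n b - c\<close> calculation by force
  moreover have "ipp (alpha i) b = 1" using \<open>c = 1\<close> c_def by simp
  ultimately show ?thesis using b(1) bi by blast
qed

lemma ascent:
  assumes B: "B \<in> OB" and i: "i \<in> N" and a: "a \<in> B" and ai: "ipp (alpha i) a = -1"
  shows "a \<notin> act n adj (sr i) B"
proof
  assume "a \<in> act n adj (sr i) B"
  then obtain a' where a': "a' \<in> B" "a = sr i a' \<or> a = - sr i a'" unfolding act_def by auto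
  then have e: "sr i a = a' \<or> sr i a = - a'" using sr_invol[OF i] sr_neg by (metis minus_minus)
  have sa: "sr i a = (\<lambda>k. a k + 1 * alpha i k)" using ai by (simp add: sr_apply fun_eq_iff)
  have ap: "a \<in> pos_roots n adj" using a B OB_sub by auto
  have sar: "sr i a \<in> roots n adj" using root_W[OF pos_root[OF ap] sr_W[OF i]] .
  have "\<forall>k. 0 \<le> sr i a k" using ap sa by (auto simp: pos_roots_def alpha_def)
  then have sap: "sr i a \<in> pos_roots n adj" using sar by (simp add: pos_roots_def)
  from e show False
  proof
    assume e1: "sr i a = a'"
    have "sr i a i = a i + 1" using sa by (simp add: alpha_def)
    then have "a' \<noteq> a" using e1 by auto
    then have "ipp a a' = 0" using OB_orth[OF B a a'(1)] by auto
    moreover have "ipp a a' = ipp a a + 1 * ipp a (alpha i)" unfolding e1[symmetric] sa ip_lin2 ..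
    ultimately show False using root_norm[OF pos_root[OF ap]] ai ip_sym[of a "alpha i"] by simp
  next
    assume "sr i a = - a'"
    then have "- a' \<in> pos_roots n adj" using sap by simp
    then show False using pos_nz a' B OB_sub by auto
  qed
qed

lemma Cstruct:
  assumes C: "C \<in> OB" and i: "i \<in> N" and fix_: "act n adj (sr i) C = C" and g: "g \<in> C"
  shows "g = alpha i \<or> ipp (alpha i) g = 0"
proof (rule ccontr)
  assume "\<not> ?thesis"
  then have gi: "g \<noteq> alpha i" and c0: "ipp (alpha i) g \<noteq> 0" by auto
  have gp: "g \<in> pos_roots n adj" using g C OB_sub by auto
  have sp: "sr i g \<in> pos_roots n adj" using posroot_sr[OF gp i gi] .
  then have "sr i g \<in> act n adj (sr i) C" using g unfolding act_def by auto
  then have sC: "sr i g \<in> C" using fix_ by simp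
  have "sr i g i = g i - ipp (alpha i) g" by (simp add: sr_apply alpha_def)
  then have "sr i g \<noteq> g" using c0 by (metis diff_0_right diff_left_imp_eq)
  then have o: "ipp g (sr i g) = 0" using OB_orth[OF C g sC] by auto
  have c1: "ipp (alpha i) g \<le> 1" using root_ip_le[OF alpha_root[OF i] pos_root[OF gp]] gi by auto
  have "- g \<noteq> alpha i" using gp neg_alpha_notpos by (metis minus_minus)
  then have "alpha i \<noteq> - g" by (metis minus_minus)
  then have c2: "ipp (alpha i) g \<ge> -1" using root_ip_ge[OF alpha_root[OF i] pos_root[OF gp]] by auto
  have "ipp g (sr i g) = ipp g g + (- ipp (alpha i) g) * ipp g (alpha i)"
    unfolding sr_eq ip_lin2 ..
  then have "ipp g (sr i g) = 2 - ipp (alpha i) g * ipp (alpha i) g"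
    using root_norm[OF pos_root[OF gp]] ip_sym[of g "alpha i"] by simp
  moreover have "ipp (alpha i) g = 1 \<or> ipp (alpha i) g = -1" using c0 c1 c2 by linarith
  ultimately show False using o by auto
qed

lemma sumzero:
  assumes B: "B \<in> OB" and ij: "adj i j"
    and fix_: "act n adj (sr i) (act n adj (sr j) B) = act n adj (sr j) B"
    and nb: "alpha i + alpha j \<notin> B" and x: "x \<in> B"
  shows "ipp (alpha i) x + ipp (alpha j) x = 0"
proof -
  have i: "i \<in> N" and j: "j \<in> N" using adj_N[OF ij] by auto
  have C: "act n adj (sr j) B \<in> OB" using OB_step[OF B j] .
  have xp: "x \<in> pos_roots n adj" using x B OB_sub by auto
  have sr: "sr j x \<in> roots n adj" using root_W[OF pos_root[OF xp] sr_W[OF j]] .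
  obtain g where g: "g = sr j x \<or> g = - sr j x" "g \<in> pos_roots n adj"
    using root_pm[OF sr] by auto
  then have gC: "g \<in> act n adj (sr j) B" using x unfolding act_def by auto
  have "g = alpha i \<or> ipp (alpha i) g = 0" using Cstruct[OF C i fix_ gC] .
  then show ?thesis
  proof
    assume "g = alpha i"
    then have "sr j x = alpha i \<or> sr j x = - alpha i" using g by auto
    then have "x = sr j (alpha i) \<or> x = - sr j (alpha i)" using sr_invol[OF j] sr_neg by metis
    then have "x = alpha i + alpha j \<or> x = - (alpha i + alpha j)" using sr_alpha_other[OF i j ij] by simp
    moreover have "- (alpha i + alpha j) \<notin> pos_roots n adj"
      by (auto simp: pos_roots_def alpha_def intro!: exI[of _ i])
    ultimately show ?thesis using x nb xp by auto
  next
    assume "ipp (alpha i) g = 0"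
    then have "ipp (alpha i) (sr j x) = 0" using g by (auto simp: ip_neg2)
    then have "ipp (sr j (alpha i)) (sr j (sr j x)) = 0" using sr_ip[OF j] by simp
    then have "ipp (alpha i + alpha j) x = 0" using sr_invol[OF j] sr_alpha_other[OF i j ij] by simp
    moreover have "alpha i + alpha j = (\<lambda>k. alpha i k + 1 * alpha j k)" by (simp add: fun_eq_iff)
    moreover have "ipp (\<lambda>k. alpha i k + 1 * alpha j k) x = ipp (alpha i) x + 1 * ipp (alpha j) x"
      by (rule ip_lin1)
    ultimately show ?thesis by simp
  qed
qed

lemma extract_one:
  assumes nn: "\<forall>k\<in>N. 0 \<le> s k" and sm: "(\<Sum>k\<in>N. s k) = (1::int)"
  shows "\<exists>k\<in>N. \<forall>l\<in>N. s l = (if l = k then 1 else 0)"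
proof -
  obtain k where k: "k \<in> N" "s k > 0"
  proof (rule ccontr)
    assume "\<not> thesis"
    then have "\<forall>k\<in>N. s k = 0" using nn that by force
    then show False using sm by simp
  qed
  have "s k \<le> 1" using member_le_sum[of k N s] k nn sm by auto
  then have sk: "s k = 1" using k by simp
  have "(\<Sum>l\<in>N - {k}. s l) = 0" using sum.remove[OF finN k(1), of s] sm sk by simp
  then have "\<forall>l\<in>N - {k}. s l = 0" using sum_nonneg_eq_0_iff[of "N - {k}" s] nn by auto
  then show ?thesis using k sk by auto
qed

lemma main:
  assumes B: "B \<in> OB" and ij: "adj i j"
    and fix_: "act n adj (sr i) (act n adj (sr j) B) = act n adj (sr j) B"
    and pi: "precw n (act n adj (sr i) B) B" and pj: "precw n (act n adj (sr j) B) B"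
  shows "alpha i + alpha j \<in> B"
proof (rule ccontr)
  assume nb: "alpha i + alpha j \<notin> B"
  have i: "i \<in> N" and j: "j \<in> N" using adj_N[OF ij] by auto
  have cij: "cartan adj j i = -1" using adj_sym[OF ij] by (auto simp: cartan_def)
  obtain d where d: "d \<in> B" "d \<noteq> alpha i" "ipp (alpha i) d = 1"
     "\<forall>v\<in>B - act n adj (sr i) B. ht n d \<le> ht n v" using lemE[OF B i pi] by blast
  obtain a where a: "a \<in> B" "a \<noteq> alpha j" "ipp (alpha j) a = 1"
     "\<forall>v\<in>B - act n adj (sr j) B. ht n a \<le> ht n v" using lemE[OF B j pj] by blast
  have dj: "ipp (alpha j) d = -1" using sumzero[OF B ij fix_ nb d(1)] d(3) by simp
  have ai: "ipp (alpha i) a = -1" using sumzero[OF B ij fix_ nb a(1)] a(3) by simp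
  have "a \<notin> act n adj (sr i) B" using ascent[OF B i a(1) ai] .
  then have h1: "ht n d \<le> ht n a" using d(4) a(1) by blast
  have "d \<notin> act n adj (sr j) B" using ascent[OF B j d(1) dj] .
  then have h2: "ht n a \<le> ht n d" using a(4) d(1) by blast
  have "d \<noteq> a" using d(3) ai by auto
  then have da: "ipp d a = 0" using OB_orth[OF B d(1) a(1)] by simp
  have dr: "d \<in> roots n adj" "a \<in> roots n adj" using d(1) a(1) B OB_sub pos_root by auto
  define e where "e = (\<lambda>k. d k + (-1) * a k)"
  define r where "r = (\<lambda>k. e k + (-1) * alpha i k)"
  have ee: "ipp e e = 4"
    unfolding e_def ip_lin1 ip_lin2 using da ip_sym[of a d] root_norm[OF dr(1)] root_norm[OF dr(2)] by simp
  have ae: "ipp (alpha i) e = 2" unfolding e_def ip_lin2 using d(3) ai by simp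
  have "ipp r r = 2"
    unfolding r_def ip_lin1 ip_lin2 using ee ae ip_sym[of e "alpha i"] ip_alpha_alpha[OF i i]
    by (simp add: cartan_def)
  then have sc: "(\<forall>k\<in>N. 0 \<le> r k) \<or> (\<forall>k\<in>N. r k \<le> 0)" by (rule sign_coh)
  have hr: "ht n r = -1" unfolding r_def e_def ht_lin using h1 h2 ht_alpha[OF i] by simp
  have "\<not> (\<forall>k\<in>N. 0 \<le> r k)"
  proof
    assume "\<forall>k\<in>N. 0 \<le> r k"
    then have "0 \<le> ht n r" unfolding ht_def by (intro sum_nonneg) auto
    then show False using hr by simp
  qed
  then have rn: "\<forall>k\<in>N. r k \<le> 0" using sc by blast
  define s where "s = - r"
  have "\<forall>k\<in>N. 0 \<le> s k" using rn by (simp add: s_def)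
  moreover have "(\<Sum>k\<in>N. s k) = 1" using hr by (simp add: s_def ht_def sum_negf)
  ultimately obtain k where k: "k \<in> N" "\<forall>l\<in>N. s l = (if l = k then 1 else 0)"
    using extract_one by blast
  have "ipp (alpha j) s = ipp (alpha j) (alpha k)" using k by (intro ip_cong) (auto simp: alpha_def)
  then have "ipp (alpha j) s = cartan adj j k" using ip_alpha_alpha[OF j k(1)] by simp
  moreover have "ipp (alpha j) r = -1"
    unfolding r_def e_def ip_lin2 using dj a(3) ip_alpha_alpha[OF j i] cij by simp
  then have "ipp (alpha j) s = 1" unfolding s_def ip_neg2 by simp
  ultimately show False by (auto simp: cartan_def split: if_splits)
qed

end


theorem lemma3p2:
  fixes n :: nat and adj :: "nat \<Rightarrow> nat \<Rightarrow> bool" and \<B> :: "(nat \<Rightarrow> int) set set"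
    and B :: "(nat \<Rightarrow> int) set" and i j :: nat
  assumes "diagram n adj" and "spherical n adj"
    and "admissible n adj \<B>"
    and "B \<in> \<B>"
    and "adj i j"
    and "act n adj (sref n adj i) (act n adj (sref n adj j) B) = act n adj (sref n adj j) B"
    and "(act n adj (sref n adj i) B, B) \<in> mless n adj \<B>"
    and "(act n adj (sref n adj j) B, B) \<in> mless n adj \<B>"
  shows "alpha i + alpha j \<in> B"
proof -
  obtain B0 where B0: "orth_pos_set n adj B0" and Bd: "\<B> = (\<lambda>w. act n adj w B0) ` weyl n adj"
    using assms(3) unfolding admissible_def is_orbit_def by blast
  interpret orb n adj B0
    using assms(1,2) B0 by unfold_locales (auto simp: spherical_def)
  have pi: "precw n (act n adj (sref n adj i) B) B" using mless_precw assms(7) Bd by simp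
  have pj: "precw n (act n adj (sref n adj j) B) B" using mless_precw assms(8) Bd by simp
  show ?thesis using main[OF _ assms(5) assms(6) pi pj] assms(4) Bd by simp
qed

end
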